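(* Let $R_{\mathrm{tr},\mathbb{F}}(\rho):=\min_{\sigma\in\mathbb{F}}\frac12\|\rho-\sigma\|_1$. If a state $\Phi$ satisfies $D_{\min,\mathbb{F}}(\Phi)=D_{s,\mathbb{F}}(\Phi)=:r$ or $D_{\min,\mathrm{aff}(\mathbb{F})}(\Phi)=D_{\max,\mathbb{F}}(\Phi)=:r$, then $R_{\mathrm{tr},\mathbb{F}}(\Phi)=1-2^{-r}$.
   Context: Finite-dimensional Hilbert space, $\log$ base 2. $\mathbb{F}$ is a convex and closed set of (free) states. $D_{\min,\mathbb{F}}(\rho)=\inf_{\sigma\in\mathbb{F}}(-\log\mathrm{Tr}[\Pi_\rho\sigma])$ ($\Pi_\rho$ support projector); $D_{\min,\mathrm{aff}(\mathbb{F})}(\rho)=\inf_{\sigma\in\mathrm{aff}(\mathbb{F})}\sup\{-\log\mathrm{Tr}[P\sigma]:0\le P\le\mathbb{1},\mathrm{Tr}[P\rho]=1\}$ with $\mathrm{aff}(\mathbb{F})$ the affine hull; $D_{\max,\mathbb{F}}(\rho)=\inf\{\log(1+s):\frac{\rho+s\tau}{1+s}\in\mathbb{F},\tau\text{ a state}\}$; $D_{s,\mathbb{F}}(\rho)=\inf\{\log(1+s):\frac{\rho+s\tau}{1+s}\in\mathbb{F},\tau\in\mathbb{F}\}$. *)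

theory Defs
  imports "HOL-Analysis.Analysis"
begin

type_synonym 'n cmat = "complex^'n::finite^'n::finite"

definition cinner :: "complex^('n::finite) \<Rightarrow> complex^'n \<Rightarrow> complex" where
  "cinner x y = (\<Sum>i\<in>UNIV. cnj (x $ i) * y $ i)"

definition dagger :: "('n::finite) cmat \<Rightarrow> 'n cmat" where
  "dagger A = (\<chi> i j. cnj (A $ j $ i))"

definition hermitian :: "('n::finite) cmat \<Rightarrow> bool" where
  "hermitian A \<longleftrightarrow> dagger A = A"

definition psd :: "('n::finite) cmat \<Rightarrow> bool" where
  "psd A \<longleftrightarrow> hermitian A \<and> (\<forall>v. 0 \<le> Re (cinner v (A *v v)))"

definition is_state :: "('n::finite) cmat \<Rightarrow> bool" where
  "is_state \<rho> \<longleftrightarrow> psd \<rho> \<and> trace \<rho> = 1"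

definition effect :: "('n::finite) cmat \<Rightarrow> bool" where
  "effect P \<longleftrightarrow> psd P \<and> psd (mat 1 - P)"

definition msqrt :: "('n::finite) cmat \<Rightarrow> 'n cmat" where
  "msqrt A = (THE B. psd B \<and> B ** B = A)"

definition trace_norm :: "('n::finite) cmat \<Rightarrow> real" where
  "trace_norm X = Re (trace (msqrt (dagger X ** X)))"

definition supp_proj :: "('n::finite) cmat \<Rightarrow> 'n cmat" where
  "supp_proj \<rho> = (THE P. hermitian P \<and> P ** P = P \<and> range (\<lambda>x. P *v x) = range (\<lambda>x. \<rho> *v x))"

definition neglog :: "real \<Rightarrow> ereal" where
  "neglog t = (if t > 0 then ereal (- log 2 t) else \<infinity>)"

definition Dmin :: "('n::finite) cmat set \<Rightarrow> 'n cmat \<Rightarrow> ereal" where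
  "Dmin F \<rho> = (INF \<sigma>\<in>F. neglog (Re (trace (supp_proj \<rho> ** \<sigma>))))"

definition Dmin_aff :: "('n::finite) cmat set \<Rightarrow> 'n cmat \<Rightarrow> ereal" where
  "Dmin_aff F \<rho> = (INF \<sigma>\<in>affine hull F.
       SUP P\<in>{P. effect P \<and> trace (P ** \<rho>) = 1}. neglog (Re (trace (P ** \<sigma>))))"

definition Dmax :: "('n::finite) cmat set \<Rightarrow> 'n cmat \<Rightarrow> ereal" where
  "Dmax F \<rho> = Inf {ereal (log 2 (1 + s)) | s. s \<ge> 0 \<and>
       (\<exists>\<tau>. is_state \<tau> \<and> (1 / (1 + s)) *\<^sub>R (\<rho> + s *\<^sub>R \<tau>) \<in> F)}"

definition Ds :: "('n::finite) cmat set \<Rightarrow> 'n cmat \<Rightarrow> ereal" where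
  "Ds F \<rho> = Inf {ereal (log 2 (1 + s)) | s. s \<ge> 0 \<and>
       (\<exists>\<tau>\<in>F. (1 / (1 + s)) *\<^sub>R (\<rho> + s *\<^sub>R \<tau>) \<in> F)}"

definition Rtr :: "('n::finite) cmat set \<Rightarrow> 'n cmat \<Rightarrow> ereal" where
  "Rtr F \<rho> = (INF \<sigma>\<in>F. ereal (trace_norm (\<rho> - \<sigma>) / 2))"

end

theory Submission
  imports Defs
begin

lemma dagger_dagger[simp]: "dagger (dagger A) = A"
  by (simp add: dagger_def vec_eq_iff)

lemma dagger_mult: "dagger (A ** B) = dagger B ** dagger A"
  by (simp add: dagger_def vec_eq_iff matrix_matrix_mult_def mult.commute)

lemma dagger_add: "dagger (A + B) = dagger A + dagger B"
  by (simp add: dagger_def vec_eq_iff)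

lemma dagger_diff: "dagger (A - B) = dagger A - dagger B"
  by (simp add: dagger_def vec_eq_iff)

lemma dagger_scaleR: "dagger (c *\<^sub>R A) = c *\<^sub>R dagger A"
  by (simp add: dagger_def vec_eq_iff)

lemma dagger_mat: "dagger (mat (of_real c)) = mat (of_real c)"
  by (simp add: dagger_def vec_eq_iff mat_def)

lemma cinner_adj: "cinner x (A *v y) = cinner (dagger A *v x) y"
  unfolding cinner_def dagger_def matrix_vector_mult_def
  apply (simp add: sum_distrib_left sum_distrib_right) apply (subst sum.swap) apply (simp add: mult_ac) done

lemma cinner_herm: "hermitian A \<Longrightarrow> cinner x (A *v y) = cinner (A *v x) y"
  by (metis cinner_adj hermitian_def)

lemma cinner_cnj: "cnj (cinner x y) = cinner y x"
  by (simp add: cinner_def mult.commute)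

lemma Re_cinner: "Re (cinner x y) = inner x y"
  by (simp add: cinner_def inner_vec_def inner_complex_def)

lemma cinner_self: "cinner x x = of_real (norm x ^ 2)"
proof -
  have "Im (cinner x x) = 0" unfolding cinner_def by (simp add: Im_sum)
  moreover have "Re (cinner x x) = norm x ^ 2" by (simp add: Re_cinner power2_norm_eq_inner)
  ultimately show ?thesis by (simp add: complex_eq_iff)
qed

lemma cinner_add_right: "cinner x (y + z) = cinner x y + cinner x z"
  by (simp add: cinner_def distrib_left sum.distrib)
lemma cinner_add_left: "cinner (x + y) z = cinner x z + cinner y z"
  by (simp add: cinner_def distrib_right sum.distrib)
lemma cinner_diff_right: "cinner x (y - z) = cinner x y - cinner x z"
  by (simp add: cinner_def right_diff_distrib sum_subtractf)
lemma cinner_diff_left: "cinner (x - y) z = cinner x z - cinner y z"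
  by (simp add: cinner_def left_diff_distrib sum_subtractf)
lemma cinner_smult_right: "cinner x (c *s y) = c * cinner x y"
  by (simp add: cinner_def sum_distrib_left mult_ac)
lemma cinner_smult_left: "cinner (c *s x) y = cnj c * cinner x y"
  by (simp add: cinner_def sum_distrib_left mult_ac)
lemma cinner_zero_right[simp]: "cinner x 0 = 0"
  by (simp add: cinner_def)
lemma cinner_zero_left[simp]: "cinner 0 x = 0"
  by (simp add: cinner_def)

lemma scaleR_smult: "c *\<^sub>R (v::complex^'n) = complex_of_real c *s v"
  by (simp add: vec_eq_iff complex_eq_iff)

lemma mvec_scaleR: "A *v (c *\<^sub>R v) = c *\<^sub>R (A *v (v::complex^'n))"
  by (simp add: scaleR_smult vec.scale)

lemma herm_inner: "hermitian A \<Longrightarrow> inner x (A *v y) = inner (A *v x) y"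
  by (metis Re_cinner cinner_herm)

lemma herm_inner2: "hermitian A \<Longrightarrow> inner x (A *v y) = inner y (A *v x)"
  by (metis herm_inner inner_commute)


lemma quad_zero:
  fixes a b :: real assumes "\<forall>t. a*t + b*t^2 \<le> 0" shows "a = 0"
proof (rule ccontr)
  assume a: "a \<noteq> 0"
  define c where "c = \<bar>b\<bar> + 1"
  have c: "c > 0" by (simp add: c_def add_pos_nonneg)
  define t where "t = a / (2*c)"
  have "-c \<le> b" unfolding c_def by linarith
  hence "b*t^2 \<ge> - c * t^2" using mult_right_mono[of "-c" b "t^2"] by simp
  hence 1: "a*t + b*t^2 \<ge> a*t - c*t^2" by simp
  have 2: "a*t - c*t^2 = a^2/(4*c)" unfolding t_def using c by (simp add: field_simps power2_eq_square)
  have 3: "a^2/(4*c) > 0" using a c by simp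
  show False using assms[rule_format, of t] 1 2 3 by linarith
qed

lemma cont_cinner: "continuous_on UNIV (\<lambda>v. cinner s (v::complex^'n))"
  unfolding cinner_def
  by (intro continuous_intros linear_continuous_on bounded_linear_vec_nth)

lemma cont_quad: "continuous_on X (\<lambda>v. inner v ((A::'n::finite cmat) *v v))"
  by (intro continuous_intros linear_continuous_on matrix_vector_mul_bounded_linear)

lemma eig_exists:
  fixes A :: "('n::finite) cmat" and S :: "(complex^'n) set"
  assumes herm: "hermitian A" and fin: "finite S" and card: "card S < CARD('n)"
    and eig: "\<forall>s\<in>S. \<exists>l::real. A *v s = of_real l *s s"
  shows "\<exists>u. norm u = 1 \<and> (\<forall>s\<in>S. cinner s u = 0) \<and> (\<exists>l::real. A *v u = of_real l *s u)"
proof -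
  define W where "W = {v. \<forall>s\<in>S. cinner s v = 0}"
  define T where "T = S \<union> (\<lambda>s. \<i> *s s) ` S"
  have finT: "finite T" using fin by (simp add: T_def)
  have "card T \<le> card S + card S" unfolding T_def
    by (metis add_le_mono card_Un_le card_image_le fin order_trans le_refl)
  hence "dim T < DIM(complex^'n)" using dim_le_card'[OF finT] card by simp
  then obtain x where x: "x \<noteq> 0" "\<And>y. y \<in> span T \<Longrightarrow> orthogonal x y"
    using orthogonal_to_subspace_exists by blast
  have xW: "x \<in> W" unfolding W_def mem_Collect_eq
  proof
    fix s assume s: "s \<in> S"
    have "inner x s = 0" using x(2)[of s] s by (simp add: T_def span_base orthogonal_def)
    hence 1: "Re (cinner s x) = 0" by (simp add: Re_cinner inner_commute)
    have "inner x (\<i> *s s) = 0" using x(2)[of "\<i> *s s"] s by (simp add: T_def span_base orthogonal_def)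
    hence "Re (cinner (\<i> *s s) x) = 0" by (simp add: Re_cinner inner_commute)
    hence 2: "Im (cinner s x) = 0" by (simp add: cinner_smult_left)
    show "cinner s x = 0" using 1 2 by (simp add: complex_eq_iff)
  qed
  have Wlin: "v + c *\<^sub>R w \<in> W" if "v \<in> W" "w \<in> W" for v w c
    using that unfolding W_def by (simp add: cinner_add_right scaleR_smult cinner_smult_right)
  have AW: "A *v v \<in> W" if "v \<in> W" for v
    unfolding W_def mem_Collect_eq
  proof
    fix s assume s: "s \<in> S"
    then obtain l :: real where l: "A *v s = of_real l *s s" using eig by blast
    have "cinner s (A *v v) = cinner (A *v s) v" using herm by (rule cinner_herm)
    also have "\<dots> = 0" using l s that by (simp add: cinner_smult_left W_def)
    finally show "cinner s (A *v v) = 0" .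
  qed
  have clW: "closed W"
  proof -
    have "W = (\<Inter>s\<in>S. {v. cinner s v = 0})" unfolding W_def by auto
    moreover have "closed {v::complex^'n. cinner s v = 0}" for s :: "complex^'n"
      by (intro closed_Collect_eq cont_cinner continuous_on_const)
    ultimately show ?thesis by auto
  qed
  define K where "K = W \<inter> sphere 0 1"
  have cK: "compact K" unfolding K_def using clW by (intro closed_Int_compact compact_sphere)
  define x1 where "x1 = (1 / norm x) *\<^sub>R x"
  have "x1 \<in> K" unfolding K_def x1_def using x(1) Wlin[OF _ xW, of 0 "1/norm x"]
    by (auto simp: W_def)
  hence neK: "K \<noteq> {}" by auto
  define f where "f v = inner v (A *v v)" for v
  obtain u where uK: "u \<in> K" and umax: "\<And>y. y \<in> K \<Longrightarrow> f y \<le> f u"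
    using continuous_attains_sup[OF cK neK cont_quad[of K A]] unfolding f_def by blast
  define lam where "lam = f u"
  have uW: "u \<in> W" and un: "norm u = 1" using uK by (auto simp: K_def)
  have fscale: "f (c *\<^sub>R v) = c^2 * f v" for c v
    by (simp add: f_def mvec_scaleR power2_eq_square)
  have bound: "f v \<le> lam * (norm v)^2" if "v \<in> W" for v
  proof (cases "v = 0")
    case True thus ?thesis by (simp add: f_def)
  next
    case False
    have "(1/norm v) *\<^sub>R v \<in> K" unfolding K_def using False Wlin[OF _ that, of 0 "1/norm v"]
      by (auto simp: W_def)
    hence "f ((1/norm v) *\<^sub>R v) \<le> lam" using umax lam_def by blast
    hence "(1/norm v)^2 * f v \<le> lam" by (simp add: fscale)
    thus ?thesis using False by (simp add: field_simps)
  qed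
  have orth: "inner w (A *v u - lam *\<^sub>R u) = 0" if wW: "w \<in> W" for w
  proof -
    have "\<forall>t. (2 * inner w (A *v u - lam *\<^sub>R u)) * t + (f w - lam * (norm w)^2) * t^2 \<le> 0"
    proof
      fix t :: real
      have "f (u + t *\<^sub>R w) \<le> lam * (norm (u + t *\<^sub>R w))^2"
        using bound Wlin[OF uW wW] by blast
      moreover have "f (u + t *\<^sub>R w) = f u + 2 * t * inner w (A *v u) + t^2 * f w"
        unfolding f_def using herm_inner2[OF herm, of u w]
        by (simp add: matrix_vector_right_distrib mvec_scaleR inner_add_left inner_add_right
            power2_eq_square algebra_simps)
      moreover have "(norm (u + t *\<^sub>R w))^2 = inner u u + 2 * t * inner w u + t^2 * inner w w"
        unfolding power2_norm_eq_inner
        by (simp add: inner_add_left inner_add_right power2_eq_square algebra_simps inner_commute)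
      moreover have "inner u u = 1" "inner w w = (norm w)^2" using un by (simp_all add: power2_norm_eq_inner[symmetric])
      ultimately show "(2 * inner w (A *v u - lam *\<^sub>R u)) * t + (f w - lam * (norm w)^2) * t^2 \<le> 0"
        unfolding lam_def by (simp add: inner_diff_right algebra_simps)
    qed
    from quad_zero[OF this] show ?thesis by simp
  qed
  have "A *v u - lam *\<^sub>R u \<in> W" using Wlin[OF AW[OF uW] uW, of "-lam"] by simp
  from orth[OF this] have "A *v u - lam *\<^sub>R u = 0" by simp
  hence "A *v u = of_real lam *s u" by (simp add: scaleR_smult)
  thus ?thesis using un uW unfolding W_def by blast
qed


definition cdiag :: "('n::finite \<Rightarrow> complex) \<Rightarrow> 'n cmat" where
  "cdiag c = (\<chi> i j. if i = j then c i else 0)"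

definition unitaryM :: "('n::finite) cmat \<Rightarrow> bool" where
  "unitaryM U \<longleftrightarrow> dagger U ** U = mat 1 \<and> U ** dagger U = mat 1"

lemma mv_axis: "((A::'n::finite cmat) *v axis k 1) $ i = A $ i $ k"
  by (simp add: matrix_vector_mult_def axis_def if_distrib cong: if_cong)

lemma cols_eq:
  fixes A B :: "'n::finite cmat"
  assumes "\<And>k. A *v axis k 1 = B *v axis k 1" shows "A = B"
  using assms by (metis mv_axis vec_eq_iff)

lemma fam:
  fixes A :: "('n::finite) cmat"
  assumes herm: "hermitian A" and fin: "finite I"
  shows "\<exists>u :: 'n \<Rightarrow> complex^'n. \<exists>l :: 'n \<Rightarrow> real.
     (\<forall>i\<in>I. \<forall>j\<in>I. cinner (u i) (u j) = (if i = j then 1 else 0)) \<and>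
     (\<forall>i\<in>I. A *v u i = of_real (l i) *s u i)"
  using fin
proof (induction I rule: finite_induct)
  case empty thus ?case by simp
next
  case (insert j I)
  then obtain u l where o: "\<forall>i\<in>I. \<forall>k\<in>I. cinner (u i) (u k) = (if i = k then 1 else 0)"
    and e: "\<forall>i\<in>I. A *v u i = of_real (l i) *s u i" by blast
  have "card (insert j I) \<le> CARD('n)" by (rule card_mono) auto
  hence cI: "card I < CARD('n)" using insert by simp
  have "card (u ` I) \<le> card I" using insert by (intro card_image_le) auto
  hence c2: "card (u ` I) < CARD('n)" using cI by simp
  obtain v where v: "norm v = 1" "\<forall>s\<in>u ` I. cinner s v = 0" "\<exists>lv::real. A *v v = of_real lv *s v"
    using eig_exists[OF herm _ c2] e insert(1) by blast
  then obtain lv :: real where lv: "A *v v = of_real lv *s v" by blast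
  define u' where "u' = u(j := v)"
  define l' where "l' = l(j := lv)"
  have vv: "cinner v v = 1" using v(1) by (simp add: cinner_self)
  have vi: "cinner (u i) v = 0" "cinner v (u i) = 0" if "i \<in> I" for i
    using v(2) that cinner_cnj[of "u i" v] by auto
  show ?case
    apply (rule exI[of _ u'], rule exI[of _ l'])
    using o e vv vi lv insert(2) unfolding u'_def l'_def
    by (auto simp: fun_upd_def)
qed

lemma spectral:
  fixes A :: "('n::finite) cmat"
  assumes herm: "hermitian A"
  shows "\<exists>U (l :: 'n \<Rightarrow> real). unitaryM U \<and> A = U ** cdiag (\<lambda>i. of_real (l i)) ** dagger U"
proof -
  obtain u and l :: "'n \<Rightarrow> real" where o: "\<forall>i j. cinner (u i) (u j) = (if i = j then 1 else (0::complex))"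
    and e: "\<forall>i. A *v u i = of_real (l i) *s u i"
    using fam[OF herm, of UNIV] by auto
  define U :: "'n cmat" where "U = (\<chi> i j. u j $ i)"
  have 1: "dagger U ** U = mat 1"
    using o by (simp add: U_def dagger_def matrix_matrix_mult_def mat_def vec_eq_iff cinner_def)
  hence 2: "U ** dagger U = mat 1" using matrix_left_right_inverse by blast
  have 3: "A ** U = U ** cdiag (\<lambda>i. of_real (l i))"
  proof -
    have "(A ** U) $ i $ j = (A *v u j) $ i" for i j
      by (simp add: U_def matrix_matrix_mult_def matrix_vector_mult_def)
    moreover have "(U ** cdiag (\<lambda>i. of_real (l i))) $ i $ j = of_real (l j) * u j $ i" for i j
      by (simp add: U_def matrix_matrix_mult_def cdiag_def if_distrib cong: if_cong)
    ultimately show ?thesis using e by (simp add: vec_eq_iff)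
  qed
  have "A = A ** (U ** dagger U)" using 2 by simp
  also have "\<dots> = U ** cdiag (\<lambda>i. of_real (l i)) ** dagger U" by (simp add: matrix_mul_assoc 3)
  finally show ?thesis using 1 2 unfolding unitaryM_def by blast
qed


lemma if_mult0: "(if P then a else 0) * b = (if P then a * b else (0::complex))"
  "b * (if P then a else 0) = (if P then b * a else (0::complex))" by simp_all

definition Mx :: "('n::finite) cmat \<Rightarrow> ('n \<Rightarrow> complex) \<Rightarrow> 'n cmat" where
  "Mx U c = U ** cdiag c ** dagger U"

lemma cdiag_mult: "cdiag a ** cdiag b = cdiag (\<lambda>i. a i * b i)"
  by (simp add: cdiag_def matrix_matrix_mult_def vec_eq_iff if_mult0 axis_def)

lemma cdiag_mv_axis: "cdiag c *v axis k 1 = c k *s axis k 1"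
  by (simp add: cdiag_def matrix_vector_mult_def vec_eq_iff axis_def if_mult0 axis_def)

lemma dagger_cdiag: "dagger (cdiag c) = cdiag (\<lambda>i. cnj (c i))"
  by (simp add: cdiag_def dagger_def vec_eq_iff)

lemma dagger_Mx: "dagger (Mx U c) = Mx U (\<lambda>i. cnj (c i))"
  by (simp add: Mx_def dagger_mult dagger_cdiag matrix_mul_assoc)

lemma Mx_real_herm: "hermitian (Mx U (\<lambda>i. of_real (r i)))"
  by (simp add: hermitian_def dagger_Mx)

lemma Mx_mult: "unitaryM U \<Longrightarrow> Mx U a ** Mx U b = Mx U (\<lambda>i. a i * b i)"
proof -
  assume u: "unitaryM U"
  have "Mx U a ** Mx U b = U ** cdiag a ** (dagger U ** U) ** cdiag b ** dagger U"
    by (simp add: Mx_def matrix_mul_assoc)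
  also have "\<dots> = U ** (cdiag a ** cdiag b) ** dagger U" using u
    by (simp add: unitaryM_def matrix_mul_assoc)
  finally show ?thesis by (simp add: cdiag_mult Mx_def)
qed

lemma Mx_mv: "unitaryM U \<Longrightarrow> Mx U c *v (U *v axis k 1) = c k *s (U *v axis k 1)"
proof -
  assume u: "unitaryM U"
  have "Mx U c *v (U *v axis k 1) = U *v (cdiag c *v ((dagger U ** U) *v axis k 1))"
    by (simp add: Mx_def matrix_vector_mul_assoc matrix_mul_assoc)
  also have "\<dots> = c k *s (U *v axis k 1)" using u
    by (simp add: unitaryM_def cdiag_mv_axis vector_scalar_commute)
  finally show ?thesis .
qed

lemma trace_Mx: "unitaryM U \<Longrightarrow> trace (Mx U c) = sum c UNIV"
proof -
  assume u: "unitaryM U"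
  have "trace (Mx U c) = trace ((U ** cdiag c) ** dagger U)" by (simp add: Mx_def)
  also have "\<dots> = trace (dagger U ** (U ** cdiag c))" by (rule trace_mul_sym)
  also have "\<dots> = trace (cdiag c)" using u by (simp add: matrix_mul_assoc unitaryM_def)
  also have "\<dots> = sum c UNIV" by (simp add: trace_def cdiag_def)
  finally show ?thesis .
qed

lemma trace_mult_Mx: "unitaryM U \<Longrightarrow>
    trace (P ** Mx U c) = (\<Sum>j\<in>UNIV. (dagger U ** P ** U) $ j $ j * c j)"
proof -
  assume u: "unitaryM U"
  have "trace (P ** Mx U c) = trace ((P ** U ** cdiag c) ** dagger U)" by (simp add: Mx_def matrix_mul_assoc)
  also have "\<dots> = trace (dagger U ** (P ** U ** cdiag c))" by (rule trace_mul_sym)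
  also have "\<dots> = trace ((dagger U ** P ** U) ** cdiag c)" by (simp add: matrix_mul_assoc)
  also have "\<dots> = (\<Sum>j\<in>UNIV. (dagger U ** P ** U) $ j $ j * c j)"
    by (simp add: trace_def cdiag_def matrix_matrix_mult_def if_mult0 axis_def)
  finally show ?thesis .
qed

lemma cinner_cdiag: "Re (cinner w (cdiag (\<lambda>i. of_real (r i)) *v w)) = (\<Sum>i\<in>UNIV. r i * ((Re (w $ i))^2 + (Im (w $ i))^2))"
proof -
  have "cdiag (\<lambda>i. of_real (r i)) *v w = (\<chi> i. of_real (r i) * w $ i)"
    by (simp add: cdiag_def matrix_vector_mult_def vec_eq_iff if_mult0 axis_def)
  thus ?thesis by (simp add: cinner_def algebra_simps power2_eq_square)
qed

lemma psd_Mx: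
  assumes u: "unitaryM U" and r: "\<And>i. r i \<ge> 0"
  shows "psd (Mx U (\<lambda>i. of_real (r i)))"
  unfolding psd_def
proof (intro conjI allI)
  show "hermitian (Mx U (\<lambda>i. complex_of_real (r i)))" by (rule Mx_real_herm)
  fix v
  have "cinner v (Mx U (\<lambda>i. of_real (r i)) *v v) = cinner (dagger U *v v) (cdiag (\<lambda>i. of_real (r i)) *v (dagger U *v v))"
    by (simp add: Mx_def matrix_vector_mul_assoc[symmetric] cinner_adj)
  thus "0 \<le> Re (cinner v (Mx U (\<lambda>i. of_real (r i)) *v v))"
    using r by (simp add: cinner_cdiag sum_nonneg)
qed

lemma psd_diag: "psd B \<Longrightarrow> 0 \<le> Re (B $ j $ j)"
proof -
  assume "psd B"
  hence "0 \<le> Re (cinner (axis j 1) (B *v axis j 1))" by (simp add: psd_def)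
  moreover have "cinner (axis j 1) (B *v axis j 1) = B $ j $ j"
    by (simp add: cinner_def mv_axis) (simp add: axis_def if_distrib[of cnj] if_mult0 cong: if_cong)
  ultimately show ?thesis by simp
qed

lemma psd_conj: "psd P \<Longrightarrow> psd (dagger U ** P ** U)"
  unfolding psd_def
proof (intro conjI allI)
  assume p: "hermitian P \<and> (\<forall>v. 0 \<le> Re (cinner v (P *v v)))"
  thus "hermitian (dagger U ** P ** U)" by (simp add: hermitian_def dagger_mult matrix_mul_assoc)
  fix v
  have "cinner v ((dagger U ** P ** U) *v v) = cinner (U *v v) (P *v (U *v v))"
    by (simp add: matrix_vector_mul_assoc[symmetric] cinner_adj)
  thus "0 \<le> Re (cinner v ((dagger U ** P ** U) *v v))" using p by simp
qed

lemma sqrt_vec: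
  assumes B: "psd B" and e: "B *v (B *v v) = of_real c *s v" and c: "c \<ge> 0"
  shows "B *v v = of_real (sqrt c) *s v"
proof (cases "c = 0")
  case True
  have hB: "hermitian B" using B by (simp add: psd_def)
  have "cinner (B *v v) (B *v v) = cinner v (B *v (B *v v))" using cinner_herm[OF hB] by simp
  also have "\<dots> = 0" using e True by simp
  finally have "B *v v = 0" by (simp add: cinner_self)
  thus ?thesis using True by simp
next
  case False
  hence cp: "c > 0" using c by simp
  define s where "s = sqrt c"
  have sp: "s > 0" using cp by (simp add: s_def)
  have ss: "of_real s * of_real s = (of_real c :: complex)" using c by (simp add: s_def flip: of_real_mult)
  define w where "w = B *v v - of_real s *s v"
  have "B *v w = of_real c *s v - of_real s *s (B *v v)"
    by (simp add: w_def matrix_vector_mult_diff_distrib vector_scalar_commute e)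
  also have "\<dots> = - (of_real s *s w)"
    by (simp add: w_def vec_eq_iff algebra_simps flip: ss)
  finally have Bw: "B *v w = - (of_real s *s w)" .
  have "0 \<le> Re (cinner w (B *v w))" using B by (simp add: psd_def)
  moreover have "cinner w (B *v w) = - (of_real s * cinner w w)"
    unfolding Bw by (simp add: cinner_def sum_negf sum_distrib_left algebra_simps)
  ultimately have "0 \<le> - (s * (norm w)^2)" by (simp add: cinner_self)
  hence "s * (norm w)^2 \<le> 0" by linarith
  hence "(norm w)^2 \<le> 0" using sp by (simp add: mult_le_0_iff)
  hence "norm w = 0" by simp
  thus ?thesis by (simp add: w_def s_def)
qed


lemma mm_diff_left: "((A::'n::finite cmat) - B) ** C = A ** C - B ** C"
  by (simp add: vec_eq_iff matrix_matrix_mult_def sum_subtractf algebra_simps)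
lemma mm_diff_right: "(C::'n::finite cmat) ** (A - B) = C ** A - C ** B"
  by (simp add: vec_eq_iff matrix_matrix_mult_def sum_subtractf algebra_simps)
lemma mm_scaleR_left: "(c *\<^sub>R (A::'n::finite cmat)) ** C = c *\<^sub>R (A ** C)"
  by (simp add: vec_eq_iff matrix_matrix_mult_def scaleR_sum_right)
lemma mm_scaleR_right: "(C::'n::finite cmat) ** (c *\<^sub>R A) = c *\<^sub>R (C ** A)"
  by (simp add: vec_eq_iff matrix_matrix_mult_def scaleR_sum_right)

lemma cdiag_diff: "cdiag a - cdiag b = cdiag (\<lambda>i. a i - b i)"
  by (simp add: cdiag_def vec_eq_iff)

lemma Mx_diff: "Mx U a - Mx U b = Mx U (\<lambda>i. a i - b i)"
  unfolding Mx_def cdiag_diff[symmetric] mm_diff_right mm_diff_left by simp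

lemma Mx_one: "unitaryM U \<Longrightarrow> Mx U (\<lambda>i. 1) = mat 1"
proof -
  assume u: "unitaryM U"
  have "cdiag (\<lambda>i. 1) = (mat 1 :: 'a::finite cmat)" by (simp add: cdiag_def mat_def)
  thus ?thesis using u by (simp add: Mx_def unitaryM_def)
qed

lemma conj_Mx: "unitaryM U \<Longrightarrow> dagger U ** Mx U c ** U = cdiag c"
proof -
  assume u: "unitaryM U"
  have "dagger U ** Mx U c ** U = (dagger U ** U) ** cdiag c ** (dagger U ** U)"
    by (simp add: Mx_def matrix_mul_assoc)
  thus ?thesis using u by (simp add: unitaryM_def)
qed

lemma cdiag_nth: "cdiag c $ j $ j = c j"
  by (simp add: cdiag_def)

lemma msqrt_Mx:
  assumes u: "unitaryM U" and r: "\<And>i. r i \<ge> 0"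
  shows "msqrt (Mx U (\<lambda>i. of_real (r i))) = Mx U (\<lambda>i. of_real (sqrt (r i)))"
  unfolding msqrt_def
proof (rule the_equality)
  let ?B0 = "Mx U (\<lambda>i. of_real (sqrt (r i)))"
  let ?M = "Mx U (\<lambda>i. of_real (r i))"
  show "psd ?B0 \<and> ?B0 ** ?B0 = ?M"
    using u r by (simp add: psd_Mx Mx_mult flip: of_real_mult)
  fix B assume B: "psd B \<and> B ** B = ?M"
  have col: "B *v (U *v axis k 1) = ?B0 *v (U *v axis k 1)" for k
  proof -
    have "B *v (B *v (U *v axis k 1)) = ?M *v (U *v axis k 1)"
      using B by (metis matrix_vector_mul_assoc)
    also have "\<dots> = of_real (r k) *s (U *v axis k 1)" by (rule Mx_mv[OF u])
    finally have "B *v (U *v axis k 1) = of_real (sqrt (r k)) *s (U *v axis k 1)"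
      using sqrt_vec B r by blast
    thus ?thesis using Mx_mv[OF u] by simp
  qed
  have "B ** U = ?B0 ** U"
    by (rule cols_eq) (simp add: col flip: matrix_vector_mul_assoc)
  hence "B ** (U ** dagger U) = ?B0 ** (U ** dagger U)" by (simp add: matrix_mul_assoc)
  thus "B = ?B0" using u by (simp add: unitaryM_def)
qed

lemma trace_norm_Mx:
  assumes u: "unitaryM U"
  shows "trace_norm (Mx U (\<lambda>i. of_real (l i))) = (\<Sum>i\<in>UNIV. \<bar>l i\<bar>)"
proof -
  have "dagger (Mx U (\<lambda>i. of_real (l i))) ** Mx U (\<lambda>i. of_real (l i)) = Mx U (\<lambda>i. of_real ((l i)^2))"
    using u by (simp add: dagger_Mx Mx_mult power2_eq_square)
  moreover have "msqrt (Mx U (\<lambda>i. of_real ((l i)^2))) = Mx U (\<lambda>i. of_real \<bar>l i\<bar>)"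
    using msqrt_Mx[OF u, of "\<lambda>i. (l i)^2"] by simp
  ultimately show ?thesis using u by (simp add: trace_norm_def trace_Mx Re_sum)
qed

lemma herm_spec:
  assumes "hermitian X"
  obtains U l where "unitaryM U" "X = Mx U (\<lambda>i. of_real (l i))"
  using spectral[OF assms] unfolding Mx_def by blast

lemma key_lower:
  assumes hX: "hermitian X" and tX: "Re (trace X) = 0" and P: "effect P"
  shows "2 * Re (trace (P ** X)) \<le> trace_norm X"
proof -
  obtain U l where u: "unitaryM U" and X: "X = Mx U (\<lambda>i. of_real (l i))"
    using herm_spec[OF hX] by blast
  have sl: "(\<Sum>i\<in>UNIV. l i) = 0" using tX u by (simp add: X trace_Mx Re_sum)
  define p where "p j = Re ((dagger U ** P ** U) $ j $ j)" for j
  have p0: "0 \<le> p j" for j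
    using P unfolding effect_def p_def by (intro psd_diag psd_conj) auto
  have "0 \<le> Re ((dagger U ** (mat 1 - P) ** U) $ j $ j)" for j
    using P unfolding effect_def by (intro psd_diag psd_conj) auto
  moreover have "dagger U ** (mat 1 - P) ** U = mat 1 - dagger U ** P ** U"
    using u by (simp add: mm_diff_left mm_diff_right unitaryM_def)
  ultimately have p1: "p j \<le> 1" for j by (simp add: p_def mat_def)
  have tr: "Re (trace (P ** X)) = (\<Sum>j\<in>UNIV. p j * l j)"
    using u by (simp add: X trace_mult_Mx Re_sum p_def)
  have "2 * (\<Sum>j\<in>UNIV. p j * l j) \<le> (\<Sum>j\<in>UNIV. \<bar>l j\<bar> + l j)"
    unfolding sum_distrib_left
  proof (rule sum_mono)
    fix j
    show "2 * (p j * l j) \<le> \<bar>l j\<bar> + l j"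
    proof (cases "l j \<ge> 0")
      case True thus ?thesis using p1[of j] mult_left_mono[of "p j" 1 "l j"] by (simp add: mult.commute)
    next
      case False thus ?thesis using p0[of j] mult_left_mono[of 0 "p j" "- l j"] by (simp add: mult.commute)
    qed
  qed
  also have "\<dots> = (\<Sum>j\<in>UNIV. \<bar>l j\<bar>)" using sl by (simp add: sum.distrib)
  finally show ?thesis using tr trace_norm_Mx[OF u] X by simp
qed

lemma herm_diff: "hermitian A \<Longrightarrow> hermitian B \<Longrightarrow> hermitian (A - B)"
  by (simp add: hermitian_def dagger_diff)

lemma herm_scaleR: "hermitian A \<Longrightarrow> hermitian (c *\<^sub>R A)"
  by (simp add: hermitian_def dagger_scaleR)

lemma trace_conj: "unitaryM U \<Longrightarrow> trace (dagger U ** A ** U) = trace A"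
proof -
  assume u: "unitaryM U"
  have "trace ((dagger U ** A) ** U) = trace (U ** (dagger U ** A))" by (rule trace_mul_sym)
  thus ?thesis using u by (simp add: matrix_mul_assoc unitaryM_def)
qed

lemma state_diag_sum:
  assumes "is_state \<rho>" "unitaryM U"
  shows "(\<Sum>j\<in>UNIV. Re ((dagger U ** \<rho> ** U) $ j $ j)) = 1"
proof -
  have "(\<Sum>j\<in>UNIV. Re ((dagger U ** \<rho> ** U) $ j $ j)) = Re (trace (dagger U ** \<rho> ** U))"
    by (simp add: trace_def Re_sum)
  also have "\<dots> = 1" using assms by (simp add: trace_conj is_state_def)
  finally show ?thesis .
qed

lemma key_upper:
  assumes \<Phi>: "is_state \<Phi>" and \<tau>: "is_state \<tau>" and a: "a \<ge> 0"
  shows "trace_norm (a *\<^sub>R (\<Phi> - \<tau>)) \<le> 2 * a"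
proof -
  have h: "hermitian (a *\<^sub>R (\<Phi> - \<tau>))"
    using \<Phi> \<tau> by (intro herm_scaleR herm_diff) (auto simp: is_state_def psd_def)
  obtain U l where u: "unitaryM U" and X: "a *\<^sub>R (\<Phi> - \<tau>) = Mx U (\<lambda>i. of_real (l i))"
    using herm_spec[OF h] by blast
  define f where "f j = Re ((dagger U ** \<Phi> ** U) $ j $ j)" for j
  define g where "g j = Re ((dagger U ** \<tau> ** U) $ j $ j)" for j
  have f0: "0 \<le> f j" for j unfolding f_def using \<Phi> by (intro psd_diag psd_conj) (simp add: is_state_def)
  have g0: "0 \<le> g j" for j unfolding g_def using \<tau> by (intro psd_diag psd_conj) (simp add: is_state_def)
  have "dagger U ** (a *\<^sub>R (\<Phi> - \<tau>)) ** U = cdiag (\<lambda>i. of_real (l i))"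
    using conj_Mx[OF u] X by simp
  hence e1: "(dagger U ** (a *\<^sub>R (\<Phi> - \<tau>)) ** U) $ j $ j = of_real (l j)" for j by (simp add: cdiag_nth)
  have e2: "(dagger U ** (a *\<^sub>R (\<Phi> - \<tau>)) ** U) $ j $ j
      = a *\<^sub>R ((dagger U ** \<Phi> ** U) $ j $ j - (dagger U ** \<tau> ** U) $ j $ j)" for j
    by (simp add: mm_scaleR_left mm_scaleR_right mm_diff_left mm_diff_right)
  have lj: "l j = a * (f j - g j)" for j
  proof -
    have "l j = Re (of_real (l j))" by simp
    also have "\<dots> = Re (a *\<^sub>R ((dagger U ** \<Phi> ** U) $ j $ j - (dagger U ** \<tau> ** U) $ j $ j))"
      using e1[of j] e2[of j] by simp
    also have "\<dots> = a * (f j - g j)" by (simp add: f_def g_def)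
    finally show ?thesis .
  qed
  have "trace_norm (a *\<^sub>R (\<Phi> - \<tau>)) = (\<Sum>j\<in>UNIV. \<bar>l j\<bar>)" using X trace_norm_Mx[OF u] by simp
  also have "\<dots> \<le> (\<Sum>j\<in>UNIV. a * f j + a * g j)"
  proof (rule sum_mono)
    fix j
    have "\<bar>f j - g j\<bar> \<le> f j + g j" using f0[of j] g0[of j] by linarith
    hence "a * \<bar>f j - g j\<bar> \<le> a * (f j + g j)" using a by (rule mult_left_mono)
    thus "\<bar>l j\<bar> \<le> a * f j + a * g j" using a by (simp add: lj abs_mult distrib_left)
  qed
  also have "\<dots> = a * (\<Sum>j\<in>UNIV. f j) + a * (\<Sum>j\<in>UNIV. g j)"
    by (simp add: sum.distrib sum_distrib_left)
  also have "\<dots> = 2 * a" using state_diag_sum[OF \<Phi> u] state_diag_sum[OF \<tau> u]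
    unfolding f_def g_def by simp
  finally show ?thesis .
qed


lemma range_mult_sub: "range (\<lambda>x. ((B::'n::finite cmat) ** C) *v x) \<subseteq> range (\<lambda>x. B *v x)"
  by (auto simp flip: matrix_vector_mul_assoc)

lemma proj_unique:
  fixes P Q :: "'n::finite cmat"
  assumes hP: "hermitian P" and iP: "P ** P = P" and hQ: "hermitian Q" and iQ: "Q ** Q = Q"
    and rg: "range (\<lambda>x. P *v x) = range (\<lambda>x. Q *v x)"
  shows "P = Q"
proof -
  have fix1: "B ** A = A" if iB: "B ** B = B" and r: "range (\<lambda>x. A *v x) \<subseteq> range (\<lambda>x. B *v x)"
    for A B :: "'n cmat"
  proof -
    have "(B ** A) *v x = A *v x" for x
    proof -
      obtain y where y: "A *v x = B *v y" using r by blast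
      have "(B ** A) *v x = (B ** B) *v y" by (simp add: y flip: matrix_vector_mul_assoc)
      thus ?thesis using iB y by simp
    qed
    thus ?thesis by (simp add: matrix_eq)
  qed
  have QP: "Q ** P = P" using fix1[OF iQ] rg by simp
  have PQ: "P ** Q = Q" using fix1[OF iP] rg by simp
  have "P = dagger P" using hP by (simp add: hermitian_def)
  also have "\<dots> = dagger (Q ** P)" using QP by simp
  also have "\<dots> = P ** Q" using hP hQ by (simp add: dagger_mult hermitian_def)
  also have "\<dots> = Q" by (rule PQ)
  finally show ?thesis .
qed

lemma supp_proj_props:
  assumes \<Phi>: "psd \<Phi>"
  shows "effect (supp_proj \<Phi>) \<and> supp_proj \<Phi> ** \<Phi> = \<Phi>"
proof -
  have h: "hermitian \<Phi>" using \<Phi> by (simp add: psd_def)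
  obtain U l where u: "unitaryM U" and X: "\<Phi> = Mx U (\<lambda>i. of_real (l i))"
    using herm_spec[OF h] by blast
  have l0: "l j \<ge> 0" for j
  proof -
    have "0 \<le> Re ((dagger U ** \<Phi> ** U) $ j $ j)" using \<Phi> by (intro psd_diag psd_conj)
    thus ?thesis using conj_Mx[OF u] X by (simp add: cdiag_nth)
  qed
  define ind where "ind j = (if l j > 0 then 1 else 0::real)" for j
  define linv where "linv j = (if l j > 0 then 1 / l j else 0::real)" for j
  define P0 where "P0 = Mx U (\<lambda>i. of_real (ind i))"
  have hP0: "hermitian P0" unfolding P0_def by (rule Mx_real_herm)
  have "(\<lambda>i. of_real (ind i) * of_real (ind i)) = (\<lambda>i. of_real (ind i) :: complex)"
    by (auto simp: fun_eq_iff ind_def)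
  hence iP0: "P0 ** P0 = P0" unfolding P0_def using u by (simp add: Mx_mult)
  have e1: "P0 = \<Phi> ** Mx U (\<lambda>i. of_real (linv i))"
  proof -
    have "(\<lambda>i. complex_of_real (l i) * complex_of_real (linv i)) = (\<lambda>i. of_real (ind i))"
      by (auto simp: fun_eq_iff ind_def linv_def simp flip: of_real_mult)
    thus ?thesis using u by (simp add: P0_def X Mx_mult)
  qed
  have e2: "P0 ** \<Phi> = \<Phi>"
  proof -
    have "ind i * l i = l i" for i using l0[of i] by (cases "l i > 0") (auto simp: ind_def)
    hence "(\<lambda>i. complex_of_real (ind i) * complex_of_real (l i)) = (\<lambda>i. of_real (l i))"
      by (simp add: fun_eq_iff flip: of_real_mult)
    thus ?thesis using u by (simp add: P0_def X Mx_mult)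
  qed
  have rg: "range (\<lambda>x. P0 *v x) = range (\<lambda>x. \<Phi> *v x)"
  proof
    show "range (\<lambda>x. P0 *v x) \<subseteq> range (\<lambda>x. \<Phi> *v x)"
      using range_mult_sub[of \<Phi> "Mx U (\<lambda>i. of_real (linv i))"] e1 by simp
    show "range (\<lambda>x. \<Phi> *v x) \<subseteq> range (\<lambda>x. P0 *v x)"
      using range_mult_sub[of P0 \<Phi>] e2 by simp
  qed
  have sp: "supp_proj \<Phi> = P0"
    unfolding supp_proj_def
  proof (rule the_equality)
    show "hermitian P0 \<and> P0 ** P0 = P0 \<and> range (\<lambda>x. P0 *v x) = range (\<lambda>x. \<Phi> *v x)"
      using hP0 iP0 rg by blast
    fix P assume "hermitian P \<and> P ** P = P \<and> range (\<lambda>x. P *v x) = range (\<lambda>x. \<Phi> *v x)"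
    thus "P = P0" using proj_unique[of P P0] hP0 iP0 rg by auto
  qed
  have "psd P0" unfolding P0_def using u by (rule psd_Mx) (simp add: ind_def)
  moreover have "psd (mat 1 - P0)"
  proof -
    have "mat 1 - P0 = Mx U (\<lambda>i. of_real (1 - ind i))"
      using u by (simp add: P0_def Mx_one[symmetric] Mx_diff)
    moreover have "psd (Mx U (\<lambda>i. of_real (1 - ind i)))" by (rule psd_Mx[OF u]) (simp add: ind_def)
    ultimately show ?thesis by simp
  qed
  ultimately show ?thesis using sp e2 by (simp add: effect_def)
qed

lemma lower_each:
  assumes \<Phi>: "is_state \<Phi>" and \<sigma>: "is_state \<sigma>" and P: "effect P"
    and tP: "Re (trace (P ** \<Phi>)) = 1"
  shows "1 - Re (trace (P ** \<sigma>)) \<le> trace_norm (\<Phi> - \<sigma>) / 2"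
proof -
  have h: "hermitian (\<Phi> - \<sigma>)" using \<Phi> \<sigma> by (intro herm_diff) (auto simp: is_state_def psd_def)
  have t: "Re (trace (\<Phi> - \<sigma>)) = 0" using \<Phi> \<sigma> by (simp add: trace_sub is_state_def)
  have "2 * Re (trace (P ** (\<Phi> - \<sigma>))) \<le> trace_norm (\<Phi> - \<sigma>)" by (rule key_lower[OF h t P])
  moreover have "Re (trace (P ** (\<Phi> - \<sigma>))) = 1 - Re (trace (P ** \<sigma>))"
    using tP by (simp add: mm_diff_right trace_sub)
  ultimately show ?thesis by simp
qed

lemma upper_each:
  assumes \<Phi>: "is_state \<Phi>" and \<tau>: "is_state \<tau>" and s: "s \<ge> 0"
  shows "trace_norm (\<Phi> - (1 / (1 + s)) *\<^sub>R (\<Phi> + s *\<^sub>R \<tau>)) / 2 \<le> 1 - 1 / (1 + s)"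
proof -
  have "\<Phi> - (1 / (1 + s)) *\<^sub>R (\<Phi> + s *\<^sub>R \<tau>) = (s / (1 + s)) *\<^sub>R (\<Phi> - \<tau>)"
  proof -
    have "\<Phi> - (1 / (1 + s)) *\<^sub>R (\<Phi> + s *\<^sub>R \<tau>) = (1 - 1 / (1 + s)) *\<^sub>R \<Phi> - (s / (1 + s)) *\<^sub>R \<tau>"
      by (simp add: scaleR_add_right scaleR_diff_left)
    also have "1 - 1 / (1 + s) = s / (1 + s)" using s by (simp add: field_simps)
    finally show ?thesis by (simp add: scaleR_diff_right)
  qed
  moreover have "trace_norm ((s / (1 + s)) *\<^sub>R (\<Phi> - \<tau>)) \<le> 2 * (s / (1 + s))"
    using s by (intro key_upper[OF \<Phi> \<tau>]) simp
  moreover have "s / (1 + s) = 1 - 1 / (1 + s)" using s by (simp add: field_simps)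
  ultimately show ?thesis by simp
qed

lemma neglog_le: "ereal x \<le> neglog t \<Longrightarrow> t \<le> 2 powr (-x)"
proof (cases "t > 0")
  case True
  assume "ereal x \<le> neglog t"
  hence "x \<le> - log 2 t" using True by (simp add: neglog_def)
  hence "log 2 t \<le> -x" by simp
  thus ?thesis using True by (simp add: log_le_iff)
next
  case False thus ?thesis by (smt (verit) powr_gt_zero)
qed

lemma neglog_less: "ereal x < neglog t \<Longrightarrow> t < 2 powr (-x)"
proof (cases "t > 0")
  case True
  assume "ereal x < neglog t"
  hence "x < - log 2 t" using True by (simp add: neglog_def)
  hence "log 2 t < -x" by simp
  thus ?thesis using True by (simp add: log_less_iff)
next
  case False thus ?thesis by (smt (verit) powr_gt_zero)
qed

lemma upper_generic:
  fixes R :: ereal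
  assumes inf: "Inf {ereal (log 2 (1 + s)) | s. s \<ge> 0 \<and> Q s} = ereal r"
    and b: "\<And>s. s \<ge> 0 \<Longrightarrow> Q s \<Longrightarrow> R \<le> ereal (1 - 1 / (1 + s))"
  shows "R \<le> ereal (1 - 2 powr (- r))"
proof (rule ccontr)
  assume "\<not> ?thesis"
  hence "ereal (1 - 2 powr (- r)) < R" by simp
  then obtain c where c1: "ereal (1 - 2 powr (- r)) < ereal c" and c2: "ereal c < R"
    using ereal_dense2 by blast
  have c1': "1 - 2 powr (- r) < c" using c1 by simp
  show False
  proof (cases "c < 1")
    case True
    define x where "x = - log 2 (1 - c)"
    have pos: "1 - c > 0" using True by simp
    have "1 - c < 2 powr (- r)" using c1' by simp
    hence "log 2 (1 - c) < - r" using pos by (simp add: log_less_iff)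
    hence "ereal r < ereal x" by (simp add: x_def)
    hence "Inf {ereal (log 2 (1 + s)) | s. s \<ge> 0 \<and> Q s} < ereal x" using inf by simp
    then obtain s where s: "s \<ge> 0" "Q s" and lx: "ereal (log 2 (1 + s)) < ereal x"
      unfolding Inf_less_iff by blast
    have "log 2 (1 + s) < x" using lx by simp
    hence "1 + s < 2 powr x" using s by (simp add: log_less_iff)
    also have "2 powr x = 1 / (1 - c)" using pos by (simp add: x_def powr_minus_divide)
    finally have "1 - c < 1 / (1 + s)" using pos s by (simp add: field_simps)
    hence "1 - 1 / (1 + s) < c" by simp
    hence "ereal (1 - 1 / (1 + s)) < ereal c" by simp
    moreover have "R \<le> ereal (1 - 1 / (1 + s))" using b s by blast
    ultimately have "R < R" using c2 by (meson le_less_trans less_trans)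
    thus False by simp
  next
    case False
    have "{ereal (log 2 (1 + s)) | s. s \<ge> 0 \<and> Q s} \<noteq> {}"
    proof
      assume e: "{ereal (log 2 (1 + s)) | s. s \<ge> 0 \<and> Q s} = {}"
      have "Inf {ereal (log 2 (1 + s)) | s. s \<ge> 0 \<and> Q s} = \<infinity>" unfolding e by (simp add: top_ereal_def)
      thus False using inf by simp
    qed
    then obtain s where s: "s \<ge> 0" "Q s" by blast
    have "R \<le> ereal (1 - 1 / (1 + s))" using b s by blast
    moreover have "1 / (1 + s) > 0" using s by simp
    hence "1 - 1 / (1 + s) < c" using False by linarith
    hence "ereal (1 - 1 / (1 + s)) < ereal c" by simp
    ultimately have "R < R" using c2 by (meson le_less_trans less_trans)
    thus False by simp
  qed
qed


theorem proposition13: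
  fixes F :: "('n::finite) cmat set" and \<Phi> :: "'n cmat" and r :: real
  assumes "convex F" and "closed F" and "\<forall>\<sigma>\<in>F. is_state \<sigma>"
    and "is_state \<Phi>"
    and "(Dmin F \<Phi> = ereal r \<and> Ds F \<Phi> = ereal r) \<or>
         (Dmin_aff F \<Phi> = ereal r \<and> Dmax F \<Phi> = ereal r)"
  shows "Rtr F \<Phi> = ereal (1 - 2 powr (- r))"
proof -
  note Fs = assms(3) and \<Phi> = assms(4)
  have lower: "ereal (1 - 2 powr (- r)) \<le> Rtr F \<Phi>"
    unfolding Rtr_def
  proof (rule INF_greatest)
    fix \<sigma> assume \<sigma>F: "\<sigma> \<in> F"
    have \<sigma>: "is_state \<sigma>" using Fs \<sigma>F by blast
    show "ereal (1 - 2 powr (- r)) \<le> ereal (trace_norm (\<Phi> - \<sigma>) / 2)"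
      using assms(5)
    proof
      assume a1: "Dmin F \<Phi> = ereal r \<and> Ds F \<Phi> = ereal r"
      have "Dmin F \<Phi> \<le> neglog (Re (trace (supp_proj \<Phi> ** \<sigma>)))"
        unfolding Dmin_def by (rule INF_lower[OF \<sigma>F])
      hence "ereal r \<le> neglog (Re (trace (supp_proj \<Phi> ** \<sigma>)))" using a1 by simp
      hence t: "Re (trace (supp_proj \<Phi> ** \<sigma>)) \<le> 2 powr (- r)" by (rule neglog_le)
      have sp: "effect (supp_proj \<Phi>) \<and> supp_proj \<Phi> ** \<Phi> = \<Phi>"
        using \<Phi> by (intro supp_proj_props) (simp add: is_state_def)
      hence "Re (trace (supp_proj \<Phi> ** \<Phi>)) = 1" using \<Phi> by (simp add: is_state_def)
      hence "1 - Re (trace (supp_proj \<Phi> ** \<sigma>)) \<le> trace_norm (\<Phi> - \<sigma>) / 2"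
        by (rule lower_each[OF \<Phi> \<sigma> conjunct1[OF sp]])
      hence "1 - 2 powr (- r) \<le> trace_norm (\<Phi> - \<sigma>) / 2" using t by linarith
      thus ?thesis by simp
    next
      assume a2: "Dmin_aff F \<Phi> = ereal r \<and> Dmax F \<Phi> = ereal r"
      have \<sigma>A: "\<sigma> \<in> affine hull F" by (rule hull_inc[OF \<sigma>F])
      have "Dmin_aff F \<Phi> \<le> (SUP P\<in>{P. effect P \<and> trace (P ** \<Phi>) = 1}. neglog (Re (trace (P ** \<sigma>))))"
        unfolding Dmin_aff_def by (rule INF_lower[OF \<sigma>A])
      hence le: "ereal r \<le> (SUP P\<in>{P. effect P \<and> trace (P ** \<Phi>) = 1}. neglog (Re (trace (P ** \<sigma>))))"
        using a2 by simp
      show ?thesis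
      proof (rule ccontr)
        define d where "d = trace_norm (\<Phi> - \<sigma>) / 2"
        assume "\<not> ?thesis"
        hence dl: "d < 1 - 2 powr (- r)" by (simp add: d_def)
        have "2 powr (- r) > 0" by simp
        hence pos: "1 - d > 0" using dl by linarith
        define x where "x = - log 2 (1 - d)"
        have "2 powr (- r) < 1 - d" using dl by simp
        hence "- r < log 2 (1 - d)" using pos by (simp add: less_log_iff)
        hence "ereal x < ereal r" by (simp add: x_def)
        hence "ereal x < (SUP P\<in>{P. effect P \<and> trace (P ** \<Phi>) = 1}. neglog (Re (trace (P ** \<sigma>))))"
          using le by (rule less_le_trans)
        then obtain P where P: "effect P" "trace (P ** \<Phi>) = 1"
          and lt: "ereal x < neglog (Re (trace (P ** \<sigma>)))" unfolding less_SUP_iff by blast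
        have "Re (trace (P ** \<sigma>)) < 2 powr (- x)" using lt by (rule neglog_less)
        also have "2 powr (- x) = 1 - d" using pos by (simp add: x_def)
        finally have "d < 1 - Re (trace (P ** \<sigma>))" by simp
        moreover have "1 - Re (trace (P ** \<sigma>)) \<le> d"
          unfolding d_def using lower_each[OF \<Phi> \<sigma> P(1)] P(2) by simp
        ultimately show False by simp
      qed
    qed
  qed
  have upper: "Rtr F \<Phi> \<le> ereal (1 - 2 powr (- r))"
    using assms(5)
  proof
    assume "Dmin F \<Phi> = ereal r \<and> Ds F \<Phi> = ereal r"
    hence inf: "Inf {ereal (log 2 (1 + s)) | s. s \<ge> 0 \<and>
       (\<exists>\<tau>\<in>F. (1 / (1 + s)) *\<^sub>R (\<Phi> + s *\<^sub>R \<tau>) \<in> F)} = ereal r" unfolding Ds_def by blast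
    show ?thesis
    proof (rule upper_generic[OF inf])
      fix s :: real assume s: "s \<ge> 0" and "\<exists>\<tau>\<in>F. (1 / (1 + s)) *\<^sub>R (\<Phi> + s *\<^sub>R \<tau>) \<in> F"
      then obtain \<tau> where \<tau>: "\<tau> \<in> F" and inF: "(1 / (1 + s)) *\<^sub>R (\<Phi> + s *\<^sub>R \<tau>) \<in> F" by blast
      have "is_state \<tau>" using Fs \<tau> by blast
      hence "trace_norm (\<Phi> - (1 / (1 + s)) *\<^sub>R (\<Phi> + s *\<^sub>R \<tau>)) / 2 \<le> 1 - 1 / (1 + s)"
        by (rule upper_each[OF \<Phi> _ s])
      thus "Rtr F \<Phi> \<le> ereal (1 - 1 / (1 + s))"
        unfolding Rtr_def by (intro INF_lower2[OF inF]) simp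
    qed
  next
    assume "Dmin_aff F \<Phi> = ereal r \<and> Dmax F \<Phi> = ereal r"
    hence inf: "Inf {ereal (log 2 (1 + s)) | s. s \<ge> 0 \<and>
       (\<exists>\<tau>. is_state \<tau> \<and> (1 / (1 + s)) *\<^sub>R (\<Phi> + s *\<^sub>R \<tau>) \<in> F)} = ereal r" unfolding Dmax_def by blast
    show ?thesis
    proof (rule upper_generic[OF inf])
      fix s :: real assume s: "s \<ge> 0" and "\<exists>\<tau>. is_state \<tau> \<and> (1 / (1 + s)) *\<^sub>R (\<Phi> + s *\<^sub>R \<tau>) \<in> F"
      then obtain \<tau> where \<tau>: "is_state \<tau>" and inF: "(1 / (1 + s)) *\<^sub>R (\<Phi> + s *\<^sub>R \<tau>) \<in> F" by blast
      have "trace_norm (\<Phi> - (1 / (1 + s)) *\<^sub>R (\<Phi> + s *\<^sub>R \<tau>)) / 2 \<le> 1 - 1 / (1 + s)"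
        by (rule upper_each[OF \<Phi> \<tau> s])
      thus "Rtr F \<Phi> \<le> ereal (1 - 1 / (1 + s))"
        unfolding Rtr_def by (intro INF_lower2[OF inF]) simp
    qed
  qed
  show ?thesis using lower upper by (rule antisym[rotated])
qed

end
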